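(* Let $1<m<n$ and let $G=K_{m,n}$ be the uniform coloured complete bipartite graph with parts $V_1=\{1,\dots,m\}$ and $V_2=\{m+1,\dots,m+n\}$, with associated linear space $\mathcal L$. Let $E_1^c$ (resp. $E_2^c$) be the set of pairs of distinct vertices in $V_1$ (resp. $V_2$), and $E$ the set of edges $\{i,j\}$ with $i\in V_1$, $j\in V_2$. Then $r=3$, $s=5$, and the vector space of linear forms in $I(\mathcal L^{-1})$ is spanned by $x_{11}-x_{ii}$ ($i\in V_1$); $x_{m+1,m+1}-x_{ii}$ ($i\in V_2$); $x_{12}-x_{ij}$ ($\{i,j\}\in E_1^c$); $x_{m+1,m+2}-x_{ij}$ ($\{i,j\}\in E_2^c$); $x_{1,m+1}-x_{ij}$ ($\{i,j\}\in E$); $m\,x_{12}-n\,x_{m+n-1,m+n}$; and $m\,x_{11}-(n-m)\,x_{m+n-1,m+n}-m\,x_{m+n,m+n}$.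
   Context: For a simple graph $G$ on $V=\{1,\dots,N\}$, its uniform coloured version has one vertex colour and one edge colour, and its associated linear space is $\mathcal L=\{\lambda_1I_N+\lambda_2A_2:\lambda_1,\lambda_2\in\mathbb C\}\subseteq\mathbb S^N$, where $A_2$ is the 0/1 adjacency matrix of $G$. The reciprocal variety $\mathcal L^{-1}$ is the Zariski closure of $\{M^{-1}:M\in\mathcal L\text{ invertible}\}$, with vanishing ideal $I(\mathcal L^{-1})\subseteq\mathbb C[x_{ij}:1\le i\le j\le N]$, using $x_{ji}=x_{ij}$. Here $r$ is the number of distinct eigenvalues of $A_2$ and $s$ is the number of orbits of the automorphism group of $G$ acting on unordered pairs $\{i,j\}$ of (not necessarily distinct) vertices via $\{i,j\}\mapsto\{\sigma(i),\sigma(j)\}$. *)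

theory Defs
  imports "Jordan_Normal_Form.Char_Poly"
begin

text \<open>A simple graph on V = {1..N} is given by a symmetric irreflexive edge relation E.\<close>

definition adj_mat :: "nat \<Rightarrow> (nat \<Rightarrow> nat \<Rightarrow> bool) \<Rightarrow> complex mat" where
  "adj_mat N E = mat N N (\<lambda>(i,j). if E (i+1) (j+1) then 1 else 0)"
  (* Jordan_Normal_Form matrices are 0-indexed: entry (i,j) corresponds to vertices i+1, j+1 *)

definition num_distinct_eigenvalues :: "nat \<Rightarrow> (nat \<Rightarrow> nat \<Rightarrow> bool) \<Rightarrow> nat" where
  "num_distinct_eigenvalues N E = card {k. eigenvalue (adj_mat N E) k}"

definition graph_auts :: "nat \<Rightarrow> (nat \<Rightarrow> nat \<Rightarrow> bool) \<Rightarrow> (nat \<Rightarrow> nat) set" where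
  "graph_auts N E = {\<sigma>. \<sigma> permutes {1..N} \<and>
      (\<forall>i\<in>{1..N}. \<forall>j\<in>{1..N}. E i j \<longleftrightarrow> E (\<sigma> i) (\<sigma> j))}"

definition unordered_pairs :: "nat \<Rightarrow> nat set set" where
  "unordered_pairs N = {{i, j} | i j. i \<in> {1..N} \<and> j \<in> {1..N}}"

definition pair_orbits :: "nat \<Rightarrow> (nat \<Rightarrow> nat \<Rightarrow> bool) \<Rightarrow> nat set set set" where
  "pair_orbits N E = (\<lambda>p. (\<lambda>\<sigma>. \<sigma> ` p) ` graph_auts N E) ` unordered_pairs N"

definition num_pair_orbits :: "nat \<Rightarrow> (nat \<Rightarrow> nat \<Rightarrow> bool) \<Rightarrow> nat" where
  "num_pair_orbits N E = card (pair_orbits N E)"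

definition lin_space :: "nat \<Rightarrow> (nat \<Rightarrow> nat \<Rightarrow> bool) \<Rightarrow> complex mat set" where
  "lin_space N E = {l1 \<cdot>\<^sub>m 1\<^sub>m N + l2 \<cdot>\<^sub>m adj_mat N E | l1 l2. True}"

text \<open>A linear form in the variables x_ij (1 <= i <= j <= N) is represented by its
  coefficient function c, where c a b is the coefficient of x_ab (a <= b), and c a b = 0
  outside 1 <= a <= b <= N.\<close>

definition lin_forms :: "nat \<Rightarrow> (nat \<Rightarrow> nat \<Rightarrow> complex) set" where
  "lin_forms N = {c. \<forall>a b. c a b \<noteq> 0 \<longrightarrow> 1 \<le> a \<and> a \<le> b \<and> b \<le> N}"

definition lf_eval :: "nat \<Rightarrow> (nat \<Rightarrow> nat \<Rightarrow> complex) \<Rightarrow> complex mat \<Rightarrow> complex" where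
  "lf_eval N c X = (\<Sum>a\<in>{1..N}. \<Sum>b\<in>{a..N}. c a b * X $$ (a - 1, b - 1))"

definition var :: "nat \<Rightarrow> nat \<Rightarrow> (nat \<Rightarrow> nat \<Rightarrow> complex)" where
  "var i j = (\<lambda>a b. if a = min i j \<and> b = max i j then 1 else 0)"

definition lf_add :: "(nat \<Rightarrow> nat \<Rightarrow> complex) \<Rightarrow> (nat \<Rightarrow> nat \<Rightarrow> complex) \<Rightarrow> (nat \<Rightarrow> nat \<Rightarrow> complex)" where
  "lf_add f g = (\<lambda>a b. f a b + g a b)"

definition lf_sub :: "(nat \<Rightarrow> nat \<Rightarrow> complex) \<Rightarrow> (nat \<Rightarrow> nat \<Rightarrow> complex) \<Rightarrow> (nat \<Rightarrow> nat \<Rightarrow> complex)" where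
  "lf_sub f g = (\<lambda>a b. f a b - g a b)"

definition lf_scale :: "complex \<Rightarrow> (nat \<Rightarrow> nat \<Rightarrow> complex) \<Rightarrow> (nat \<Rightarrow> nat \<Rightarrow> complex)" where
  "lf_scale k f = (\<lambda>a b. k * f a b)"

definition lf_span :: "(nat \<Rightarrow> nat \<Rightarrow> complex) set \<Rightarrow> (nat \<Rightarrow> nat \<Rightarrow> complex) set" where
  "lf_span S = {(\<lambda>a b. \<Sum>g\<in>T. u g * g a b) | T u. finite T \<and> T \<subseteq> S}"

text \<open>Linear forms in the vanishing ideal of the reciprocal variety. A polynomial vanishes on
  the Zariski closure of a set iff it vanishes on the set, so these are exactly the linear
  forms vanishing at M^{-1} for every invertible M in L.\<close>
definition linear_forms_in_ideal :: "nat \<Rightarrow> (nat \<Rightarrow> nat \<Rightarrow> bool) \<Rightarrow> (nat \<Rightarrow> nat \<Rightarrow> complex) set" where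
  "linear_forms_in_ideal N E = {c \<in> lin_forms N.
      \<forall>M \<in> lin_space N E. \<forall>B \<in> carrier_mat N N. M * B = 1\<^sub>m N \<longrightarrow> lf_eval N c B = 0}"

definition Kmn :: "nat \<Rightarrow> nat \<Rightarrow> nat \<Rightarrow> nat \<Rightarrow> bool" where
  "Kmn m n i j = ((i \<in> {1..m} \<and> j \<in> {m+1..m+n}) \<or> (j \<in> {1..m} \<and> i \<in> {m+1..m+n}))"

definition Kmn_forms :: "nat \<Rightarrow> nat \<Rightarrow> (nat \<Rightarrow> nat \<Rightarrow> complex) set" where
  "Kmn_forms m n =
     {lf_sub (var 1 1) (var i i) | i. i \<in> {1..m}}
   \<union> {lf_sub (var (m+1) (m+1)) (var i i) | i. i \<in> {m+1..m+n}}
   \<union> {lf_sub (var 1 2) (var i j) | i j. i \<in> {1..m} \<and> j \<in> {1..m} \<and> i \<noteq> j}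
   \<union> {lf_sub (var (m+1) (m+2)) (var i j) | i j. i \<in> {m+1..m+n} \<and> j \<in> {m+1..m+n} \<and> i \<noteq> j}
   \<union> {lf_sub (var 1 (m+1)) (var i j) | i j. i \<in> {1..m} \<and> j \<in> {m+1..m+n}}
   \<union> {lf_sub (lf_scale (of_nat m) (var 1 2)) (lf_scale (of_nat n) (var (m+n-1) (m+n)))}
   \<union> {lf_sub (lf_sub (lf_scale (of_nat m) (var 1 1))
                       (lf_scale (of_nat n - of_nat m) (var (m+n-1) (m+n))))
             (lf_scale (of_nat m) (var (m+n) (m+n)))}"

end

theory Submission
  imports Defs
begin


lemma adj_entry:
  assumes "i < m+n" "j < m+n"
  shows "adj_mat (m+n) (Kmn m n) $$ (i,j) = (if (i<m) \<noteq> (j<m) then 1 else 0)"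
  using assms unfolding adj_mat_def Kmn_def by auto

definition Mof :: "nat \<Rightarrow> nat \<Rightarrow> complex \<Rightarrow> complex \<Rightarrow> complex mat" where
  "Mof m n l1 l2 = l1 \<cdot>\<^sub>m 1\<^sub>m (m+n) + l2 \<cdot>\<^sub>m adj_mat (m+n) (Kmn m n)"

lemma Mof_entry:
  assumes "i < m+n" "k < m+n"
  shows "Mof m n l1 l2 $$ (i,k) = (if i = k then l1 else 0) + (if (i<m) \<noteq> (k<m) then l2 else 0)"
  proof -
  have "dim_row (adj_mat (m+n) (Kmn m n)) = m+n" "dim_col (adj_mat (m+n) (Kmn m n)) = m+n"
    by (auto simp: adj_mat_def)
  then show ?thesis using assms by (simp add: Mof_def adj_entry)
qed

lemma Mof_dim[simp]: "dim_row (Mof m n l1 l2) = m+n" "dim_col (Mof m n l1 l2) = m+n"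
  by (auto simp: Mof_def adj_mat_def)

lemma prod_entry:
  assumes B: "B \<in> carrier_mat (m+n) (m+n)" and i: "i < m+n" and j: "j < m+n"
  shows "(Mof m n l1 l2 * B) $$ (i,j) = l1 * B$$(i,j) +
     l2 * (if i < m then (\<Sum>k\<in>{m..<m+n}. B$$(k,j)) else (\<Sum>k\<in>{0..<m}. B$$(k,j)))"
proof -
  have "(Mof m n l1 l2 * B) $$ (i,j) = (\<Sum>k\<in>{0..<m+n}. Mof m n l1 l2 $$ (i,k) * B$$(k,j))"
    using B i j by (simp add: scalar_prod_def)
  also have "\<dots> = (\<Sum>k\<in>{0..<m+n}. (if i = k then l1 * B$$(k,j) else 0) + (if (i<m) \<noteq> (k<m) then l2 * B$$(k,j) else 0))"
    by (rule sum.cong) (auto simp: Mof_entry i)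
  also have "\<dots> = l1 * B$$(i,j) + (\<Sum>k\<in>{0..<m+n}. (if (i<m) \<noteq> (k<m) then l2 * B$$(k,j) else 0))"
    using i by (simp add: sum.distrib)
  also have "(\<Sum>k\<in>{0..<m+n}. (if (i<m) \<noteq> (k<m) then l2 * B$$(k,j) else 0))
     = (\<Sum>k\<in>{0..<m}. (if (i<m) \<noteq> (k<m) then l2 * B$$(k,j) else 0)) + (\<Sum>k\<in>{m..<m+n}. (if (i<m) \<noteq> (k<m) then l2 * B$$(k,j) else 0))"
    by (rule sum.atLeastLessThan_concat[symmetric]) auto
  also have "\<dots> = l2 * (if i < m then (\<Sum>k\<in>{m..<m+n}. B$$(k,j)) else (\<Sum>k\<in>{0..<m}. B$$(k,j)))"
    by (simp add: sum_distrib_left)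
  finally show ?thesis .
qed

definition Dv :: "nat \<Rightarrow> nat \<Rightarrow> complex \<Rightarrow> complex \<Rightarrow> complex" where
  "Dv m n l1 l2 = l1^2 - of_nat m * of_nat n * l2^2"

definition Bf :: "nat \<Rightarrow> nat \<Rightarrow> complex \<Rightarrow> complex \<Rightarrow> nat \<Rightarrow> nat \<Rightarrow> complex" where
  "Bf m n l1 l2 i j =
    (if i<m \<and> j<m then (if i=j then 1/l1 else 0) + of_nat n * l2^2/(l1*Dv m n l1 l2)
     else if \<not> i<m \<and> \<not> j<m then (if i=j then 1/l1 else 0) + of_nat m * l2^2/(l1*Dv m n l1 l2)
     else - l2/Dv m n l1 l2)"

lemma sum_delta_const:
  assumes "finite A"
  shows "(\<Sum>k\<in>A. (if k = j then a else 0) + c) = (if j \<in> A then a else 0) + of_nat (card A) * (c::complex)"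
  using assms by (simp add: sum.distrib)

lemma Bf_sum2:
  assumes "j < m+n"
  shows "(\<Sum>k\<in>{m..<m+n}. Bf m n l1 l2 k j) = (if j < m then of_nat n * (- l2/Dv m n l1 l2)
      else 1/l1 + of_nat n * (of_nat m * l2^2/(l1*Dv m n l1 l2)))"
proof (cases "j < m")
  case True
  then show ?thesis by (simp add: Bf_def)
next
  case False
  have "(\<Sum>k\<in>{m..<m+n}. Bf m n l1 l2 k j) = (\<Sum>k\<in>{m..<m+n}. (if k = j then 1/l1 else 0) + of_nat m * l2^2/(l1*Dv m n l1 l2))"
    by (rule sum.cong) (use False in \<open>auto simp: Bf_def\<close>)
  also have "\<dots> = 1/l1 + of_nat n * (of_nat m * l2^2/(l1*Dv m n l1 l2))"
    using False assms by (subst sum_delta_const) auto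
  finally show ?thesis using False by simp
qed

lemma Bf_sum1:
  assumes "j < m+n"
  shows "(\<Sum>k\<in>{0..<m}. Bf m n l1 l2 k j) = (if j < m then 1/l1 + of_nat m * (of_nat n * l2^2/(l1*Dv m n l1 l2))
      else of_nat m * (- l2/Dv m n l1 l2))"
proof (cases "j < m")
  case False
  then show ?thesis by (simp add: Bf_def)
next
  case True
  have "(\<Sum>k\<in>{0..<m}. Bf m n l1 l2 k j) = (\<Sum>k\<in>{0..<m}. (if k = j then 1/l1 else 0) + of_nat n * l2^2/(l1*Dv m n l1 l2))"
    by (rule sum.cong) (use True in \<open>auto simp: Bf_def\<close>)
  also have "\<dots> = 1/l1 + of_nat m * (of_nat n * l2^2/(l1*Dv m n l1 l2))"
    using True assms by (subst sum_delta_const) auto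
  finally show ?thesis using True by simp
qed

lemma Bf_inverse:
  assumes l1: "l1 \<noteq> 0" and D: "Dv m n l1 l2 \<noteq> 0"
  shows "Mof m n l1 l2 * mat (m+n) (m+n) (\<lambda>(i,j). Bf m n l1 l2 i j) = 1\<^sub>m (m+n)"
proof (rule eq_matI)
  fix i j assume i: "i < dim_row (1\<^sub>m (m+n) :: complex mat)" and j: "j < dim_col (1\<^sub>m (m+n) :: complex mat)"
  then have i: "i < m+n" and j: "j < m+n" by auto
  have B: "mat (m+n) (m+n) (\<lambda>(i,j). Bf m n l1 l2 i j) \<in> carrier_mat (m+n) (m+n)" by auto
  have e: "\<And>k. k < m+n \<Longrightarrow> mat (m+n) (m+n) (\<lambda>(i,j). Bf m n l1 l2 i j) $$ (k,j) = Bf m n l1 l2 k j"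
    using j by simp
  have s2: "(\<Sum>k\<in>{m..<m+n}. mat (m+n) (m+n) (\<lambda>(i,j). Bf m n l1 l2 i j) $$ (k,j)) = (\<Sum>k\<in>{m..<m+n}. Bf m n l1 l2 k j)"
    by (rule sum.cong) (auto simp: e)
  have s1: "(\<Sum>k\<in>{0..<m}. mat (m+n) (m+n) (\<lambda>(i,j). Bf m n l1 l2 i j) $$ (k,j)) = (\<Sum>k\<in>{0..<m}. Bf m n l1 l2 k j)"
    by (rule sum.cong) (auto simp: e)
  show "(Mof m n l1 l2 * mat (m+n) (m+n) (\<lambda>(i,j). Bf m n l1 l2 i j)) $$ (i, j) = 1\<^sub>m (m+n) $$ (i, j)"
    unfolding prod_entry[OF B i j] s1 s2 Bf_sum1[OF j] Bf_sum2[OF j] using i j l1 D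
    apply (auto simp: e Bf_def field_simps power2_eq_square)
    apply (simp_all add: Dv_def power2_eq_square algebra_simps)
    done
qed auto

lemma Bf_forward:
  assumes m: "1 < m" and B: "B \<in> carrier_mat (m+n) (m+n)" and inv: "Mof m n l1 l2 * B = 1\<^sub>m (m+n)"
  shows "l1 \<noteq> 0 \<and> Dv m n l1 l2 \<noteq> 0 \<and> (\<forall>i<m+n. \<forall>j<m+n. B $$ (i,j) = Bf m n l1 l2 i j)"
proof -
  define R1 where "R1 j = (\<Sum>k\<in>{0..<m}. B$$(k,j))" for j
  define R2 where "R2 j = (\<Sum>k\<in>{m..<m+n}. B$$(k,j))" for j
  have E: "l1 * B$$(i,j) + l2 * (if i < m then R2 j else R1 j) = (if i = j then 1 else 0)"
    if "i < m+n" "j < m+n" for i j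
    using prod_entry[OF B that, of l1 l2] inv that by (simp add: R1_def R2_def)
  have S1: "l1 * R1 j + of_nat m * l2 * R2 j = (if j < m then 1 else 0)" if j: "j < m+n" for j
  proof -
    have "(\<Sum>i\<in>{0..<m}. l1 * B$$(i,j) + l2 * R2 j) = (\<Sum>i\<in>{0..<m}. (if i = j then 1 else 0))"
    proof (rule sum.cong)
      fix i assume "i \<in> {0..<m}"
      then have a: "i < m+n" and b: "i < m" by auto
      show "l1 * B$$(i,j) + l2 * R2 j = (if i = j then 1 else 0)" using E[OF a j] b by simp
    qed simp
    then show ?thesis using j by (simp add: sum.distrib R1_def sum_distrib_left mult.assoc)
  qed
  have S2: "l1 * R2 j + of_nat n * l2 * R1 j = (if j < m then 0 else 1)" if j: "j < m+n" for j
  proof -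
    have "(\<Sum>i\<in>{m..<m+n}. l1 * B$$(i,j) + l2 * R1 j) = (\<Sum>i\<in>{m..<m+n}. (if i = j then 1 else 0))"
    proof (rule sum.cong)
      fix i assume "i \<in> {m..<m+n}"
      then have a: "i < m+n" and b: "\<not> i < m" by auto
      show "l1 * B$$(i,j) + l2 * R1 j = (if i = j then 1 else 0)" using E[OF a j] b by simp
    qed simp
    then show ?thesis using j by (simp add: sum.distrib R2_def sum_distrib_left mult.assoc)
  qed
  have l1: "l1 \<noteq> 0"
  proof
    assume "l1 = 0"
    with E[of 1 0] E[of 0 0] m show False by auto
  qed
  have DR1: "Dv m n l1 l2 * R1 j = l1 * (l1 * R1 j + of_nat m * l2 * R2 j) - of_nat m * l2 * (l1 * R2 j + of_nat n * l2 * R1 j)" for j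
    by (simp add: Dv_def algebra_simps power2_eq_square)
  have DR2: "Dv m n l1 l2 * R2 j = l1 * (l1 * R2 j + of_nat n * l2 * R1 j) - of_nat n * l2 * (l1 * R1 j + of_nat m * l2 * R2 j)" for j
    by (simp add: Dv_def algebra_simps power2_eq_square)
  have D: "Dv m n l1 l2 \<noteq> 0"
  proof
    assume "Dv m n l1 l2 = 0"
    with DR1[of 0] S1[of 0] S2[of 0] m l1 show False by simp
  qed
  have "B $$ (i,j) = Bf m n l1 l2 i j" if i: "i < m+n" and j: "j < m+n" for i j
  proof -
    have "Dv m n l1 l2 * R1 j = (if j < m then l1 else - of_nat m * l2)"
      unfolding DR1 S1[OF j] S2[OF j] by simp
    then have R1v: "R1 j = (if j < m then l1 else - of_nat m * l2) / Dv m n l1 l2"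
      using D by (simp add: field_simps)
    have "Dv m n l1 l2 * R2 j = (if j < m then - of_nat n * l2 else l1)"
      unfolding DR2 S1[OF j] S2[OF j] by simp
    then have R2v: "R2 j = (if j < m then - of_nat n * l2 else l1) / Dv m n l1 l2"
      using D by (simp add: field_simps)
    have Bv: "B$$(i,j) = ((if i = j then 1 else 0) - l2 * (if i < m then R2 j else R1 j)) / l1"
      using E[OF i j] l1 by (simp add: field_simps)
    show ?thesis unfolding Bv R1v R2v using l1 D
      by (auto simp: Bf_def field_simps power2_eq_square)
  qed
  then show ?thesis using l1 D by auto
qed

definition Sig :: "nat \<Rightarrow> (nat \<times> nat) set" where
  "Sig N = (SIGMA a:{1..N}. {a..N})"

lemma finite_Sig[simp]: "finite (Sig N)" by (simp add: Sig_def)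

lemma lf_eval_Sig: "lf_eval N c X = (\<Sum>(a,b)\<in>Sig N. c a b * X $$ (a-1,b-1))"
  unfolding lf_eval_def Sig_def by (simp add: sum.Sigma)

lemma lf_eval_sub: "lf_eval N (lf_sub f g) X = lf_eval N f X - lf_eval N g X"
  unfolding lf_eval_def lf_sub_def by (simp add: algebra_simps sum_subtractf)

lemma lf_eval_scale: "lf_eval N (lf_scale k f) X = k * lf_eval N f X"
  unfolding lf_eval_def lf_scale_def by (simp add: algebra_simps sum_distrib_left)

lemma lf_eval_var:
  assumes "1 \<le> i" "i \<le> N" "1 \<le> j" "j \<le> N"
  shows "lf_eval N (var i j) X = X $$ (min i j - 1, max i j - 1)"
proof -
  have mem: "(min i j, max i j) \<in> Sig N" using assms by (auto simp: Sig_def)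
  have "lf_eval N (var i j) X = (\<Sum>p\<in>Sig N. if p = (min i j, max i j) then X $$ (min i j - 1, max i j - 1) else 0)"
    unfolding lf_eval_Sig by (rule sum.cong) (auto simp: var_def split: if_splits)
  also have "\<dots> = X $$ (min i j - 1, max i j - 1)" using mem by simp
  finally show ?thesis .
qed

lemma lf_eval_lin: "lf_eval N (\<lambda>a b. \<Sum>g\<in>T. u g * g a b) X = (\<Sum>g\<in>T. u g * lf_eval N g X)"
  unfolding lf_eval_def by (simp add: sum_distrib_left sum_distrib_right sum.swap[of _ T] mult.assoc)

lemma span_base: "g \<in> S \<Longrightarrow> g \<in> lf_span S"
  unfolding lf_span_def by (rule CollectI, rule exI[of _ "{g}"], rule exI[of _ "\<lambda>_. 1"]) auto

lemma span_zero: "(\<lambda>a b. 0) \<in> lf_span S"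
  unfolding lf_span_def by (rule CollectI, rule exI[of _ "{}"]) auto

lemma span_scale: "f \<in> lf_span S \<Longrightarrow> (\<lambda>a b. k * f a b) \<in> lf_span S"
proof -
  assume "f \<in> lf_span S"
  then obtain T u where T: "finite T" "T \<subseteq> S" and f: "f = (\<lambda>a b. \<Sum>g\<in>T. u g * g a b)"
    unfolding lf_span_def by blast
  show ?thesis unfolding lf_span_def f
    by (rule CollectI, rule exI[of _ T], rule exI[of _ "\<lambda>g. k * u g"]) (auto simp: T sum_distrib_left mult.assoc)
qed

lemma span_add: "f \<in> lf_span S \<Longrightarrow> h \<in> lf_span S \<Longrightarrow> (\<lambda>a b. f a b + h a b) \<in> lf_span S"
proof -
  assume "f \<in> lf_span S" "h \<in> lf_span S"
  then obtain T1 u1 T2 u2 where T: "finite T1" "T1 \<subseteq> S" "finite T2" "T2 \<subseteq> S"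
    and f: "f = (\<lambda>a b. \<Sum>g\<in>T1. u1 g * g a b)" and h: "h = (\<lambda>a b. \<Sum>g\<in>T2. u2 g * g a b)"
    unfolding lf_span_def by blast
  define u where "u g = (if g \<in> T1 then u1 g else 0) + (if g \<in> T2 then u2 g else 0)" for g
  have "(\<lambda>a b. f a b + h a b) = (\<lambda>a b. \<Sum>g\<in>T1 \<union> T2. u g * g a b)"
  proof (intro ext)
    fix a b
    have "(\<Sum>g\<in>T1 \<union> T2. u g * g a b) = (\<Sum>g\<in>T1 \<union> T2. (if g \<in> T1 then u1 g * g a b else 0)) + (\<Sum>g\<in>T1 \<union> T2. (if g \<in> T2 then u2 g * g a b else 0))"
      unfolding u_def sum.distrib[symmetric] by (rule sum.cong) (auto simp: distrib_right)
    also have "\<dots> = f a b + h a b"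
    proof -
      have 1: "(\<Sum>g\<in>T1 \<union> T2. (if g \<in> T1 then u1 g * g a b else 0)) = (\<Sum>g\<in>T1. u1 g * g a b)"
        using T by (subst sum.inter_restrict[symmetric]) (auto intro: sum.cong)
      have 2: "(\<Sum>g\<in>T1 \<union> T2. (if g \<in> T2 then u2 g * g a b else 0)) = (\<Sum>g\<in>T2. u2 g * g a b)"
        using T by (subst sum.inter_restrict[symmetric]) (auto intro: sum.cong)
      show ?thesis unfolding 1 2 f h by simp
    qed
    finally show "f a b + h a b = (\<Sum>g\<in>T1 \<union> T2. u g * g a b)" by simp
  qed
  then show ?thesis unfolding lf_span_def using T by blast
qed

lemma span_sum: "finite X \<Longrightarrow> (\<And>x. x \<in> X \<Longrightarrow> F x \<in> lf_span S) \<Longrightarrow> (\<lambda>a b. \<Sum>x\<in>X. F x a b) \<in> lf_span S"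
proof (induction X rule: finite_induct)
  case empty then show ?case using span_zero by simp
next
  case (insert x X)
  then show ?case using span_add[of "F x" S "\<lambda>a b. \<Sum>x\<in>X. F x a b"] by simp
qed




lemma var_lf: "1 \<le> i \<Longrightarrow> i \<le> N \<Longrightarrow> 1 \<le> j \<Longrightarrow> j \<le> N \<Longrightarrow> var i j \<in> lin_forms N"
  unfolding lin_forms_def var_def by (auto split: if_splits)

lemma sub_lf: assumes "f \<in> lin_forms N" "g \<in> lin_forms N" shows "lf_sub f g \<in> lin_forms N"
  unfolding lin_forms_def
proof (intro CollectI allI impI)
  fix a b assume "lf_sub f g a b \<noteq> 0"
  then have "f a b \<noteq> 0 \<or> g a b \<noteq> 0" by (auto simp: lf_sub_def)
  then show "1 \<le> a \<and> a \<le> b \<and> b \<le> N" using assms unfolding lin_forms_def by blast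
qed

lemma scale_lf: assumes "f \<in> lin_forms N" shows "lf_scale k f \<in> lin_forms N"
  unfolding lin_forms_def
proof (intro CollectI allI impI)
  fix a b assume "lf_scale k f a b \<noteq> 0"
  then have "f a b \<noteq> 0" by (auto simp: lf_scale_def)
  then show "1 \<le> a \<and> a \<le> b \<and> b \<le> N" using assms unfolding lin_forms_def by blast
qed

lemma Kmn_forms_cases:
  assumes g: "g \<in> Kmn_forms m n"
  obtains
    (c1) i where "i \<in> {1..m}" "g = lf_sub (var 1 1) (var i i)"
  | (c2) i where "i \<in> {m+1..m+n}" "g = lf_sub (var (m+1) (m+1)) (var i i)"
  | (c3) i j where "i \<in> {1..m}" "j \<in> {1..m}" "i \<noteq> j" "g = lf_sub (var 1 2) (var i j)"
  | (c4) i j where "i \<in> {m+1..m+n}" "j \<in> {m+1..m+n}" "i \<noteq> j" "g = lf_sub (var (m+1) (m+2)) (var i j)"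
  | (c5) i j where "i \<in> {1..m}" "j \<in> {m+1..m+n}" "g = lf_sub (var 1 (m+1)) (var i j)"
  | (c6) "g = lf_sub (lf_scale (of_nat m) (var 1 2)) (lf_scale (of_nat n) (var (m+n-1) (m+n)))"
  | (c7) "g = lf_sub (lf_sub (lf_scale (of_nat m) (var 1 1))
                       (lf_scale (of_nat n - of_nat m) (var (m+n-1) (m+n))))
             (lf_scale (of_nat m) (var (m+n) (m+n)))"
  using g unfolding Kmn_forms_def
  apply (elim UnE)
  apply (erule CollectE, elim exE conjE, blast)+
  apply simp_all
  done

lemma Kmn_forms_lf:
  assumes "1 < m" "m < n" "g \<in> Kmn_forms m n"
  shows "g \<in> lin_forms (m+n)"
  using assms(3)
proof (cases rule: Kmn_forms_cases)
qed (use assms(1,2) in \<open>auto intro!: sub_lf scale_lf var_lf\<close>)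

lemma span_lf:
  assumes "\<And>g. g \<in> S \<Longrightarrow> g \<in> lin_forms N" "c \<in> lf_span S"
  shows "c \<in> lin_forms N"
proof -
  obtain T u where T: "finite T" "T \<subseteq> S" and c: "c = (\<lambda>a b. \<Sum>g\<in>T. u g * g a b)"
    using assms(2) unfolding lf_span_def by blast
  show ?thesis unfolding lin_forms_def
  proof (intro CollectI allI impI)
    fix a b assume "c a b \<noteq> 0"
    then obtain g where "g \<in> T" "u g * g a b \<noteq> 0" unfolding c by (meson sum.neutral)
    then have "g a b \<noteq> 0" by auto
    with assms(1) \<open>g \<in> T\<close> T show "1 \<le> a \<and> a \<le> b \<and> b \<le> N" unfolding lin_forms_def by blast
  qed
qed


lemma gen_vanish:
  assumes m: "1 < m" "m < n" and l1: "l1 \<noteq> 0" and D: "Dv m n l1 l2 \<noteq> 0"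
    and B: "\<forall>i<m+n. \<forall>j<m+n. B $$ (i,j) = Bf m n l1 l2 i j"
    and g: "g \<in> Kmn_forms m n"
  shows "lf_eval (m+n) g B = 0"
proof -
  have Bv: "B $$ (i,j) = Bf m n l1 l2 i j" if "i < m+n" "j < m+n" for i j using B that by auto
  have ev: "lf_eval (m+n) (var i j) B = Bf m n l1 l2 (min i j - 1) (max i j - 1)"
    if "1 \<le> i" "i \<le> m+n" "1 \<le> j" "j \<le> m+n" for i j
    using that by (simp add: lf_eval_var Bv)
  have b01: "Bf m n l1 l2 0 1 = of_nat n * l2^2/(l1*Dv m n l1 l2)" using m by (simp add: Bf_def)
  have b00: "Bf m n l1 l2 0 0 = 1/l1 + of_nat n * l2^2/(l1*Dv m n l1 l2)" using m by (simp add: Bf_def)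
  have bx: "Bf m n l1 l2 (m+n-Suc (Suc 0)) (m+n-1) = of_nat m * l2^2/(l1*Dv m n l1 l2)" using m by (auto simp: Bf_def)
  have bNN: "Bf m n l1 l2 (m+n-1) (m+n-1) = 1/l1 + of_nat m * l2^2/(l1*Dv m n l1 l2)" using m by (auto simp: Bf_def)
  from g show ?thesis
  proof (cases rule: Kmn_forms_cases)
    case c1 then show ?thesis using m by (simp add: lf_eval_sub ev) (auto simp: Bf_def)
  next
    case c2 then show ?thesis using m by (simp add: lf_eval_sub ev) (auto simp: Bf_def)
  next
    case c3 then show ?thesis using m by (simp add: lf_eval_sub ev) (auto simp: Bf_def min_def max_def)
  next
    case c4 then show ?thesis using m by (simp add: lf_eval_sub ev) (auto simp: Bf_def min_def max_def)
  next
    case c5 then show ?thesis using m by (simp add: lf_eval_sub ev) (auto simp: Bf_def min_def max_def)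
  next
    case c6
    then have "lf_eval (m+n) g B = of_nat m * Bf m n l1 l2 0 1 - of_nat n * Bf m n l1 l2 (m+n-Suc (Suc 0)) (m+n-1)"
      using m by (simp add: lf_eval_sub lf_eval_scale ev)
    also have "\<dots> = 0" unfolding b01 b00 bx bNN using l1 D by (simp add: field_simps)
    finally show ?thesis .
  next
    case c7
    then have "lf_eval (m+n) g B = of_nat m * Bf m n l1 l2 0 0 - (of_nat n - of_nat m) * Bf m n l1 l2 (m+n-Suc (Suc 0)) (m+n-1)
       - of_nat m * Bf m n l1 l2 (m+n-1) (m+n-1)"
      using m by (simp add: lf_eval_sub lf_eval_scale ev)
    also have "\<dots> = 0" unfolding b01 b00 bx bNN using l1 D by (simp add: field_simps)
    finally show ?thesis .
  qed
qed




lemma incl2: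
  assumes m: "1 < m" "m < n"
  shows "lf_span (Kmn_forms m n) \<subseteq> linear_forms_in_ideal (m+n) (Kmn m n)"
proof
  fix c assume c: "c \<in> lf_span (Kmn_forms m n)"
  have lf: "c \<in> lin_forms (m+n)" using span_lf[OF Kmn_forms_lf[OF m] c] .
  obtain T u where T: "finite T" "T \<subseteq> Kmn_forms m n" and cdef: "c = (\<lambda>a b. \<Sum>g\<in>T. u g * g a b)"
    using c unfolding lf_span_def by blast
  have "lf_eval (m+n) c B = 0" if M: "M \<in> lin_space (m+n) (Kmn m n)" and B: "B \<in> carrier_mat (m+n) (m+n)"
    and inv: "M * B = 1\<^sub>m (m+n)" for M B
  proof -
    obtain l1 l2 where "M = Mof m n l1 l2" using M unfolding lin_space_def Mof_def by blast
    with Bf_forward[OF m(1) B] inv have F: "l1 \<noteq> 0" "Dv m n l1 l2 \<noteq> 0" "\<forall>i<m+n. \<forall>j<m+n. B $$ (i,j) = Bf m n l1 l2 i j"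
      by auto
    have "lf_eval (m+n) c B = (\<Sum>g\<in>T. u g * lf_eval (m+n) g B)" unfolding cdef by (rule lf_eval_lin)
    also have "\<dots> = 0" using gen_vanish[OF m F] T by (intro sum.neutral) auto
    finally show ?thesis .
  qed
  then show "c \<in> linear_forms_in_ideal (m+n) (Kmn m n)" using lf unfolding linear_forms_in_ideal_def by blast
qed

definition cls :: "nat \<Rightarrow> nat \<times> nat \<Rightarrow> nat" where
  "cls m p = (case p of (a,b) \<Rightarrow> if b \<le> m then (if a = b then 1 else 3) else if m < a then (if a = b then 2 else 4) else 5)"

definition rep :: "nat \<Rightarrow> nat \<Rightarrow> (nat \<Rightarrow> nat \<Rightarrow> complex)" where
  "rep m k = (if k = 1 then var 1 1 else if k = 2 then var (m+1) (m+1) else if k = 3 then var 1 2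
     else if k = 4 then var (m+1) (m+2) else var 1 (m+1))"

lemma cls_range: "cls m p \<in> {1,2,3,4,5}"
  unfolding cls_def by (auto split: prod.splits)

lemma diff_in:
  assumes m: "1 < m" "m < n" and p: "(a,b) \<in> Sig (m+n)"
  shows "lf_sub (rep m (cls m (a,b))) (var a b) \<in> Kmn_forms m n"
proof -
  from p have ab: "1 \<le> a" "a \<le> b" "b \<le> m+n" by (auto simp: Sig_def)
  consider "b \<le> m" "a = b" | "b \<le> m" "a \<noteq> b" | "\<not> b \<le> m" "m < a" "a = b" | "\<not> b \<le> m" "m < a" "a \<noteq> b"
    | "\<not> b \<le> m" "\<not> m < a" by blast
  then show ?thesis
  proof cases
    case 1
    then have "lf_sub (rep m (cls m (a,b))) (var a b) \<in> {lf_sub (var 1 1) (var i i) | i. i \<in> {1..m}}"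
      using ab by (auto simp: cls_def rep_def)
    then show ?thesis unfolding Kmn_forms_def by blast
  next
    case 2
    then have "lf_sub (rep m (cls m (a,b))) (var a b) \<in> {lf_sub (var 1 2) (var i j) | i j. i \<in> {1..m} \<and> j \<in> {1..m} \<and> i \<noteq> j}"
      using ab by (simp add: cls_def rep_def) (rule exI[of _ a], rule exI[of _ b], simp)
    then show ?thesis unfolding Kmn_forms_def by blast
  next
    case 3
    then have "lf_sub (rep m (cls m (a,b))) (var a b) \<in> {lf_sub (var (m+1) (m+1)) (var i i) | i. i \<in> {m+1..m+n}}"
      using ab by (auto simp: cls_def rep_def)
    then show ?thesis unfolding Kmn_forms_def by blast
  next
    case 4
    then have "lf_sub (rep m (cls m (a,b))) (var a b) \<in> {lf_sub (var (m+1) (m+2)) (var i j) | i j. i \<in> {m+1..m+n} \<and> j \<in> {m+1..m+n} \<and> i \<noteq> j}"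
      using ab by (simp add: cls_def rep_def) (rule exI[of _ a], rule exI[of _ b], simp)
    then show ?thesis unfolding Kmn_forms_def by blast
  next
    case 5
    then have "lf_sub (rep m (cls m (a,b))) (var a b) \<in> {lf_sub (var 1 (m+1)) (var i j) | i j. i \<in> {1..m} \<and> j \<in> {m+1..m+n}}"
      using ab by (simp add: cls_def rep_def) (rule exI[of _ a], rule exI[of _ b], simp)
    then show ?thesis unfolding Kmn_forms_def by blast
  qed
qed

definition valk :: "nat \<Rightarrow> nat \<Rightarrow> complex \<Rightarrow> complex \<Rightarrow> nat \<Rightarrow> complex" where
  "valk m n l1 l2 k = (if k = 1 then 1/l1 + of_nat n * l2^2/(l1*Dv m n l1 l2)
     else if k = 2 then 1/l1 + of_nat m * l2^2/(l1*Dv m n l1 l2)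
     else if k = 3 then of_nat n * l2^2/(l1*Dv m n l1 l2)
     else if k = 4 then of_nat m * l2^2/(l1*Dv m n l1 l2)
     else - l2/Dv m n l1 l2)"

lemma Bf_cls:
  assumes p: "(a,b) \<in> Sig (m+n)"
  shows "Bf m n l1 l2 (a-1) (b-1) = valk m n l1 l2 (cls m (a,b))"
  using p by (auto simp: Sig_def Bf_def valk_def cls_def)

lemma group_cls:
  fixes c :: "nat \<Rightarrow> nat \<Rightarrow> complex" and h :: "nat \<Rightarrow> complex"
  shows "(\<Sum>p\<in>Sig N. c (fst p) (snd p) * h (cls m p)) = (\<Sum>k\<in>{1,2,3,4,5}. (\<Sum>p\<in>{p\<in>Sig N. cls m p = k}. c (fst p) (snd p)) * h k)"
proof -
  have "(\<Sum>p\<in>Sig N. c (fst p) (snd p) * h (cls m p)) =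
     (\<Sum>k\<in>{1,2,3,4,5}. \<Sum>p\<in>{p\<in>Sig N. cls m p = k}. c (fst p) (snd p) * h (cls m p))"
    by (rule sum.group[symmetric]) (use cls_range in auto)
  also have "\<dots> = (\<Sum>k\<in>{1,2,3,4,5}. (\<Sum>p\<in>{p\<in>Sig N. cls m p = k}. c (fst p) (snd p)) * h k)"
  proof (intro sum.cong refl)
    fix k
    have "(\<Sum>p\<in>{p\<in>Sig N. cls m p = k}. c (fst p) (snd p) * h (cls m p)) = (\<Sum>p\<in>{p\<in>Sig N. cls m p = k}. c (fst p) (snd p) * h k)"
      by (rule sum.cong) auto
    then show "(\<Sum>p\<in>{p\<in>Sig N. cls m p = k}. c (fst p) (snd p) * h (cls m p)) = (\<Sum>p\<in>{p\<in>Sig N. cls m p = k}. c (fst p) (snd p)) * h k"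
      by (simp add: sum_distrib_right)
  qed
  finally show ?thesis .
qed

lemma var_Sig:
  assumes "p \<in> Sig N"
  shows "var (fst p) (snd p) a b = (if p = (a,b) then 1 else 0)"
  using assms by (auto simp: Sig_def var_def min_def max_def)

lemma lf_expand:
  assumes c: "c \<in> lin_forms N"
  shows "c a b = (\<Sum>p\<in>Sig N. c (fst p) (snd p) * var (fst p) (snd p) a b)"
proof -
  have "(\<Sum>p\<in>Sig N. c (fst p) (snd p) * var (fst p) (snd p) a b) = (\<Sum>p\<in>Sig N. if p = (a,b) then c a b else 0)"
    by (rule sum.cong) (auto simp: var_Sig)
  also have "\<dots> = (if (a,b) \<in> Sig N then c a b else 0)" by simp
  also have "\<dots> = c a b"
  proof (cases "c a b = 0")
    case False
    with c have "1 \<le> a \<and> a \<le> b \<and> b \<le> N" unfolding lin_forms_def by auto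
    then have "(a,b) \<in> Sig N" unfolding Sig_def by auto
    then show ?thesis by simp
  qed simp
  finally show ?thesis by simp
qed

lemma incl1:
  assumes m: "1 < m" "m < n"
  shows "linear_forms_in_ideal (m+n) (Kmn m n) \<subseteq> lf_span (Kmn_forms m n)"
proof
  fix c assume cI: "c \<in> linear_forms_in_ideal (m+n) (Kmn m n)"
  then have lf: "c \<in> lin_forms (m+n)" and V: "\<And>M B. M \<in> lin_space (m+n) (Kmn m n) \<Longrightarrow> B \<in> carrier_mat (m+n) (m+n)
      \<Longrightarrow> M * B = 1\<^sub>m (m+n) \<Longrightarrow> lf_eval (m+n) c B = 0"
    unfolding linear_forms_in_ideal_def by auto
  define w where "w k = (\<Sum>p\<in>{p\<in>Sig (m+n). cls m p = k}. c (fst p) (snd p))" for k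
  have eq: "w 1 * valk m n l1 l2 1 + (w 2 * valk m n l1 l2 2 + (w 3 * valk m n l1 l2 3 + (w 4 * valk m n l1 l2 4 + w 5 * valk m n l1 l2 5))) = 0"
    if l1: "l1 \<noteq> 0" and D: "Dv m n l1 l2 \<noteq> 0" for l1 l2
  proof -
    define B where "B = mat (m+n) (m+n) (\<lambda>(i,j). Bf m n l1 l2 i j)"
    have M: "Mof m n l1 l2 \<in> lin_space (m+n) (Kmn m n)" unfolding lin_space_def Mof_def by blast
    have 0: "lf_eval (m+n) c B = 0" using V[OF M _ Bf_inverse[OF l1 D]] unfolding B_def by auto
    have "lf_eval (m+n) c B = (\<Sum>p\<in>Sig (m+n). c (fst p) (snd p) * valk m n l1 l2 (cls m p))"
      unfolding lf_eval_Sig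
    proof (rule sum.cong)
      fix p assume p: "p \<in> Sig (m+n)"
      obtain a b where ab: "p = (a,b)" by (cases p)
      with p have "a - 1 < m+n" "b - 1 < m+n" by (auto simp: Sig_def)
      then show "(case p of (a, b) \<Rightarrow> c a b * B $$ (a - 1, b - 1)) = c (fst p) (snd p) * valk m n l1 l2 (cls m p)"
        using Bf_cls[of a b m n l1 l2] p ab by (simp add: B_def)
    qed simp
    also have "\<dots> = (\<Sum>k\<in>{1,2,3,4,5}. w k * valk m n l1 l2 k)"
      unfolding group_cls w_def ..
    finally show ?thesis using 0 by simp
  qed
  have mn: "of_nat m * of_nat n \<noteq> (1::complex)"
  proof
    assume "of_nat m * of_nat n = (1::complex)"
    then have "of_nat (m*n) = (of_nat 1 :: complex)" by simp
    then have "m * n = 1" using of_nat_eq_iff by blast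
    with m show False by simp
  qed
  define d :: complex where "d = 1 - of_nat m * of_nat n"
  have d: "d \<noteq> 0" using mn unfolding d_def by simp
  have D1: "Dv m n 1 1 = d" "Dv m n (-1) 1 = d" unfolding Dv_def d_def by simp_all
  have e0: "w 1 + w 2 = 0" using eq[of 1 0] by (simp add: valk_def Dv_def)
  have ep: "w 1 * (d + of_nat n) + w 2 * (d + of_nat m) + w 3 * of_nat n + w 4 * of_nat m - w 5 = 0"
  proof -
    have h: "w 1 * (1 + of_nat n / d) + (w 2 * (1 + of_nat m / d) + (w 3 * (of_nat n / d) + (w 4 * (of_nat m / d) + w 5 * (- 1 / d)))) = 0"
      using eq[of 1 1] d by (simp add: valk_def D1)
    have "d * (w 1 * (1 + of_nat n / d) + (w 2 * (1 + of_nat m / d) + (w 3 * (of_nat n / d) + (w 4 * (of_nat m / d) + w 5 * (- 1 / d)))))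
      = w 1 * (d + of_nat n) + w 2 * (d + of_nat m) + w 3 * of_nat n + w 4 * of_nat m - w 5"
      using d by (simp add: field_simps)
    then show ?thesis using h by simp
  qed
  have em: "- (w 1 * (d + of_nat n)) - w 2 * (d + of_nat m) - w 3 * of_nat n - w 4 * of_nat m - w 5 = 0"
  proof -
    have h: "w 1 * (-1 + - (of_nat n / d)) + (w 2 * (-1 + - (of_nat m / d)) + (w 3 * (- (of_nat n / d)) + (w 4 * (- (of_nat m / d)) + w 5 * (- 1 / d)))) = 0"
      using eq[of "-1" 1] d by (simp add: valk_def D1)
    have "d * (w 1 * (-1 + - (of_nat n / d)) + (w 2 * (-1 + - (of_nat m / d)) + (w 3 * (- (of_nat n / d)) + (w 4 * (- (of_nat m / d)) + w 5 * (- 1 / d)))))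
      = - (w 1 * (d + of_nat n)) - w 2 * (d + of_nat m) - w 3 * of_nat n - w 4 * of_nat m - w 5"
      using d by (simp add: field_simps)
    then show ?thesis using h by simp
  qed
  have w5: "w 5 = 0"
  proof -
    have "-2 * w 5 = (w 1 * (d + of_nat n) + w 2 * (d + of_nat m) + w 3 * of_nat n + w 4 * of_nat m - w 5)
       + (- (w 1 * (d + of_nat n)) - w 2 * (d + of_nat m) - w 3 * of_nat n - w 4 * of_nat m - w 5)"
      by (simp add: algebra_simps)
    also have "\<dots> = 0" unfolding ep em by simp
    finally show ?thesis by simp
  qed
  have w2: "w 2 = - w 1" using e0 by (metis add.commute add_eq_0_iff)
  have m0: "(of_nat m :: complex) \<noteq> 0" using m by simp
  have w4: "w 4 = - (w 1 * (of_nat n - of_nat m) + w 3 * of_nat n) / of_nat m"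
    using ep w5 w2 m0 by (simp add: field_simps algebra_simps)
  define N where "N = m + n"
  define dif where "dif p = lf_sub (rep m (cls m p)) (var (fst p) (snd p))" for p
  define G6 where "G6 = lf_sub (lf_scale (of_nat m) (var 1 2)) (lf_scale (of_nat n) (var (m+n-1) (m+n)))"
  define G7 where "G7 = lf_sub (lf_sub (lf_scale (of_nat m) (var 1 1))
                       (lf_scale (of_nat n - of_nat m) (var (m+n-1) (m+n))))
             (lf_scale (of_nat m) (var (m+n) (m+n)))"
  define D4 where "D4 = lf_sub (var (m+1) (m+2)) (var (m+n-1) (m+n))"
  define D2 where "D2 = lf_sub (var (m+1) (m+1)) (var (m+n) (m+n))"
  have G6in: "G6 \<in> Kmn_forms m n" unfolding G6_def Kmn_forms_def by blast
  have G7in: "G7 \<in> Kmn_forms m n" unfolding G7_def Kmn_forms_def by blast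
  have D4in: "D4 \<in> Kmn_forms m n"
  proof -
    have "D4 \<in> {lf_sub (var (m+1) (m+2)) (var i j) | i j. i \<in> {m+1..m+n} \<and> j \<in> {m+1..m+n} \<and> i \<noteq> j}"
      unfolding D4_def using m by (intro CollectI exI[of _ "m+n-1"] exI[of _ "m+n"]) auto
    then show ?thesis unfolding Kmn_forms_def by blast
  qed
  have D2in: "D2 \<in> Kmn_forms m n"
  proof -
    have "D2 \<in> {lf_sub (var (m+1) (m+1)) (var i i) | i. i \<in> {m+1..m+n}}"
      unfolding D2_def using m by (intro CollectI exI[of _ "m+n"]) auto
    then show ?thesis unfolding Kmn_forms_def by blast
  qed
  let ?R = "\<lambda>a b. (\<Sum>p\<in>Sig (m+n). - c (fst p) (snd p) * dif p a b) +
     ((w 1 / of_nat m) * G7 a b + ((- (w 1 / of_nat m) * (of_nat n - of_nat m)) * D4 a b +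
      ((- w 1) * D2 a b + ((w 3 / of_nat m) * G6 a b + (- (w 3 / of_nat m) * of_nat n) * D4 a b))))"
  have Rin: "?R \<in> lf_span (Kmn_forms m n)"
    apply (rule span_add)
     apply (rule span_sum, simp)
     apply (rule span_scale, rule span_base)
     apply (unfold dif_def)
     apply (metis diff_in[OF m] prod.collapse)
    apply (rule span_add, rule span_scale, rule span_base, rule G7in)
    apply (rule span_add, rule span_scale, rule span_base, rule D4in)
    apply (rule span_add, rule span_scale, rule span_base, rule D2in)
    apply (rule span_add, rule span_scale, rule span_base, rule G6in)
    apply (rule span_scale, rule span_base, rule D4in)
    done
  have "c = ?R"
  proof (intro ext)
    fix a b
    have vd: "var (fst p) (snd p) a b = rep m (cls m p) a b - dif p a b" for p
      by (simp add: dif_def lf_sub_def)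
    have "c a b = (\<Sum>p\<in>Sig (m+n). c (fst p) (snd p) * var (fst p) (snd p) a b)"
      by (rule lf_expand[OF lf])
    also have "\<dots> = (\<Sum>p\<in>Sig (m+n). c (fst p) (snd p) * rep m (cls m p) a b) - (\<Sum>p\<in>Sig (m+n). c (fst p) (snd p) * dif p a b)"
      unfolding vd by (simp add: algebra_simps sum_subtractf)
    also have "(\<Sum>p\<in>Sig (m+n). c (fst p) (snd p) * rep m (cls m p) a b) = (\<Sum>k\<in>{1,2,3,4,5}. w k * rep m k a b)"
      unfolding w_def by (rule group_cls[where h = "\<lambda>k. rep m k a b"])
    also have "\<dots> = w 1 * var 1 1 a b + w 2 * var (m+1) (m+1) a b + w 3 * var 1 2 a b + w 4 * var (m+1) (m+2) a b + w 5 * var 1 (m+1) a b"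
      by (simp add: rep_def)
    also have "\<dots> = (w 1 / of_nat m) * G7 a b + ((- (w 1 / of_nat m) * (of_nat n - of_nat m)) * D4 a b +
      ((- w 1) * D2 a b + ((w 3 / of_nat m) * G6 a b + (- (w 3 / of_nat m) * of_nat n) * D4 a b)))"
      unfolding G7_def G6_def D4_def D2_def lf_sub_def lf_scale_def w5 w2 w4 using m0
      by (simp add: field_simps)
    finally show "c a b = ?R a b" by (simp add: sum_negf)
  qed
  with Rin show "c \<in> lf_span (Kmn_forms m n)" by simp
qed




lemma adj_dim[simp]: "dim_row (adj_mat N E) = N" "dim_col (adj_mat N E) = N"
  by (auto simp: adj_mat_def)

lemma mulvec:
  assumes v: "v \<in> carrier_vec (m+n)" and i: "i < m+n"
  shows "(adj_mat (m+n) (Kmn m n) *\<^sub>v v) $ i = (if i < m then (\<Sum>k\<in>{m..<m+n}. v$k) else (\<Sum>k\<in>{0..<m}. v$k))"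
proof -
  have "(adj_mat (m+n) (Kmn m n) *\<^sub>v v) $ i = (\<Sum>k\<in>{0..<m+n}. (if (i<m) \<noteq> (k<m) then v$k else 0))"
    using v i by (auto simp: scalar_prod_def adj_entry intro!: sum.cong)
  also have "\<dots> = (\<Sum>k\<in>{0..<m}. (if (i<m) \<noteq> (k<m) then v$k else 0)) + (\<Sum>k\<in>{m..<m+n}. (if (i<m) \<noteq> (k<m) then v$k else 0))"
    by (rule sum.atLeastLessThan_concat[symmetric]) auto
  also have "\<dots> = (if i < m then (\<Sum>k\<in>{m..<m+n}. v$k) else (\<Sum>k\<in>{0..<m}. v$k))"
    by simp
  finally show ?thesis .
qed

lemma eig_iff:
  assumes m: "1 < m" "m < n"
  shows "eigenvalue (adj_mat (m+n) (Kmn m n)) k \<longleftrightarrow> k \<in> {0, csqrt (of_nat (m*n)), - csqrt (of_nat (m*n))}"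
proof
  let ?A = "adj_mat (m+n) (Kmn m n)"
  let ?s = "csqrt (of_nat (m*n))"
  assume "eigenvalue ?A k"
  then obtain v where v: "v \<in> carrier_vec (m+n)" "v \<noteq> 0\<^sub>v (m+n)" "?A *\<^sub>v v = k \<cdot>\<^sub>v v"
    unfolding eigenvalue_def eigenvector_def by auto
  define S1 where "S1 = (\<Sum>k\<in>{0..<m}. v$k)"
  define S2 where "S2 = (\<Sum>k\<in>{m..<m+n}. v$k)"
  have E: "k * v$i = (if i < m then S2 else S1)" if "i < m+n" for i
  proof -
    have "(?A *\<^sub>v v) $ i = (k \<cdot>\<^sub>v v) $ i" using v(3) by simp
    then show ?thesis using mulvec[OF v(1) that] v(1) that by (auto simp: S1_def S2_def split: if_splits)
  qed
  have T1: "k * S1 = of_nat m * S2"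
  proof -
    have "k * S1 = (\<Sum>i\<in>{0..<m}. k * v$i)" by (simp add: S1_def sum_distrib_left)
    also have "\<dots> = (\<Sum>i\<in>{0..<m}. S2)" by (rule sum.cong) (auto simp: E)
    finally show ?thesis by simp
  qed
  have T2: "k * S2 = of_nat n * S1"
  proof -
    have "k * S2 = (\<Sum>i\<in>{m..<m+n}. k * v$i)" by (simp add: S2_def sum_distrib_left)
    also have "\<dots> = (\<Sum>i\<in>{m..<m+n}. S1)" by (rule sum.cong) (auto simp: E)
    finally show ?thesis by simp
  qed
  show "k \<in> {0, ?s, - ?s}"
  proof (cases "k = 0")
    case False
    have "S1 \<noteq> 0 \<or> S2 \<noteq> 0"
    proof (rule ccontr)
      assume "\<not> (S1 \<noteq> 0 \<or> S2 \<noteq> 0)"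
      then have "\<forall>i<m+n. v$i = 0"
      proof (intro allI impI)
        fix i assume i: "i < m+n" and "\<not> (S1 \<noteq> 0 \<or> S2 \<noteq> 0)"
        then have "k * v$i = 0" using E[OF i] by auto
        then show "v$i = 0" using False by simp
      qed
      then have "v = 0\<^sub>v (m+n)" using v(1) by (intro eq_vecI) auto
      with v(2) show False by simp
    qed
    moreover have "k^2 * S1 = of_nat (m*n) * S1"
    proof -
      have "k^2 * S1 = k * (k * S1)" by (simp add: power2_eq_square)
      also have "\<dots> = of_nat m * (k * S2)" unfolding T1 by simp
      also have "\<dots> = of_nat (m*n) * S1" unfolding T2 by simp
      finally show ?thesis .
    qed
    moreover have "k^2 * S2 = of_nat (m*n) * S2"
    proof -
      have "k^2 * S2 = k * (k * S2)" by (simp add: power2_eq_square)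
      also have "\<dots> = of_nat n * (k * S1)" unfolding T2 by simp
      also have "\<dots> = of_nat (m*n) * S2" unfolding T1 by simp
      finally show ?thesis .
    qed
    ultimately have "k^2 = of_nat (m*n)" by auto
    then have k2: "k^2 = ?s^2" by (simp only: power2_csqrt)
    then have "(k - ?s) * (k + ?s) = 0" by (simp add: algebra_simps power2_eq_square)
    then show ?thesis by (auto simp: add_eq_0_iff2)
  qed simp
next
  let ?A = "adj_mat (m+n) (Kmn m n)"
  let ?s = "csqrt (of_nat (m*n))"
  assume k: "k \<in> {0, ?s, - ?s}"
  show "eigenvalue ?A k"
  proof (cases "k = 0")
    case True
    define v :: "complex vec" where "v = vec (m+n) (\<lambda>i. (if i = 0 then 1 else 0) - (if i = 1 then 1 else 0))"
    have vc: "v \<in> carrier_vec (m+n)" by (simp add: v_def)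
    have "?A *\<^sub>v v = k \<cdot>\<^sub>v v"
    proof (rule eq_vecI)
      fix i assume "i < dim_vec (k \<cdot>\<^sub>v v)"
      then have i: "i < m+n" by (simp add: v_def)
      have s1: "(\<Sum>j\<in>{0..<m}. v$j) = 0" using m
        by (simp add: v_def sum_subtractf)
      have s2: "(\<Sum>j\<in>{m..<m+n}. v$j) = 0"
        by (rule sum.neutral) (use m in \<open>auto simp: v_def\<close>)
      show "(?A *\<^sub>v v) $ i = (k \<cdot>\<^sub>v v) $ i" using True i by (simp add: mulvec[OF vc i] s1 s2) (simp add: v_def)
    qed (simp add: v_def)
    moreover have "v \<noteq> 0\<^sub>v (m+n)"
    proof
      assume "v = 0\<^sub>v (m+n)"
      then have "v $ 0 = 0" using m by simp
      moreover have "v $ 0 = 1" using m by (simp add: v_def)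
      ultimately show False by simp
    qed
    ultimately show ?thesis using vc unfolding eigenvalue_def eigenvector_def by auto
  next
    case False
    then have "k = ?s \<or> k = - ?s" using k by blast
    then have "k^2 = ?s^2" by (metis power2_minus)
    then have ks: "k^2 = of_nat (m*n)" by (simp only: power2_csqrt)
    define v :: "complex vec" where "v = vec (m+n) (\<lambda>i. if i < m then k else of_nat m)"
    have vc: "v \<in> carrier_vec (m+n)" by (simp add: v_def)
    have "?A *\<^sub>v v = k \<cdot>\<^sub>v v"
    proof (rule eq_vecI)
      fix i assume "i < dim_vec (k \<cdot>\<^sub>v v)"
      then have i: "i < m+n" by (simp add: v_def)
      have s1: "(\<Sum>j\<in>{0..<m}. v$j) = of_nat m * k"
        by (simp add: v_def)
      have s2: "(\<Sum>j\<in>{m..<m+n}. v$j) = of_nat n * of_nat m"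
        by (simp add: v_def)
      show "(?A *\<^sub>v v) $ i = (k \<cdot>\<^sub>v v) $ i" using i ks
        by (simp add: mulvec[OF vc i] s1 s2) (simp add: v_def power2_eq_square)
    qed (simp add: v_def)
    moreover have "v \<noteq> 0\<^sub>v (m+n)"
    proof
      assume "v = 0\<^sub>v (m+n)"
      then have "v $ m = 0" using m by simp
      moreover have "v $ m = of_nat m" using m by (simp add: v_def)
      ultimately show False using m by simp
    qed
    ultimately show ?thesis using vc unfolding eigenvalue_def eigenvector_def by auto
  qed
qed

lemma num_eig:
  assumes m: "1 < m" "m < n"
  shows "num_distinct_eigenvalues (m + n) (Kmn m n) = 3"
proof -
  let ?s = "csqrt (of_nat (m*n))"
  have "?s^2 \<noteq> 0" using m by (simp add: power2_csqrt)
  then have s0: "?s \<noteq> 0" by auto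
  then have s1: "?s \<noteq> - ?s" by simp
  have "{k. eigenvalue (adj_mat (m+n) (Kmn m n)) k} = {0, ?s, - ?s}" using eig_iff[OF m] by auto
  then show ?thesis unfolding num_distinct_eigenvalues_def using s0 s1 by simp
qed




lemma Kmn_iff: "i \<in> {1..m+n} \<Longrightarrow> j \<in> {1..m+n} \<Longrightarrow> Kmn m n i j \<longleftrightarrow> ((i \<le> m) \<noteq> (j \<le> m))"
  unfolding Kmn_def by auto

lemma aut_in: "\<sigma> \<in> graph_auts N E \<Longrightarrow> i \<in> {1..N} \<Longrightarrow> \<sigma> i \<in> {1..N}"
  unfolding graph_auts_def by (metis (no_types, lifting) mem_Collect_eq permutes_in_image)

lemma aut_inj: "\<sigma> \<in> graph_auts N E \<Longrightarrow> inj \<sigma>"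
  unfolding graph_auts_def by (auto simp: permutes_inj)

lemma aut_part:
  assumes m: "1 < m" "m < n" and s: "\<sigma> \<in> graph_auts (m+n) (Kmn m n)" and i: "i \<in> {1..m+n}"
  shows "\<sigma> i \<le> m \<longleftrightarrow> i \<le> m"
proof -
  have pres: "Kmn m n a b \<longleftrightarrow> Kmn m n (\<sigma> a) (\<sigma> b)" if "a \<in> {1..m+n}" "b \<in> {1..m+n}" for a b
    using s that unfolding graph_auts_def by blast
  have V1: "\<sigma> a \<le> m" if a: "a \<in> {1..m}" for a
  proof (rule ccontr)
    assume na: "\<not> \<sigma> a \<le> m"
    have "\<sigma> b \<in> {1..m}" if b: "b \<in> {m+1..m+n}" for b
    proof -
      have "Kmn m n a b" using a b unfolding Kmn_def by auto
      then have "Kmn m n (\<sigma> a) (\<sigma> b)" using pres a b by auto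
      moreover have "\<sigma> a \<in> {1..m+n}" "\<sigma> b \<in> {1..m+n}" using aut_in[OF s] a b by auto
      ultimately show ?thesis using na Kmn_iff by auto
    qed
    then have "\<sigma> ` {m+1..m+n} \<subseteq> {1..m}" by auto
    moreover have "inj_on \<sigma> {m+1..m+n}" using aut_inj[OF s] by (auto intro: inj_on_subset)
    ultimately have "card {m+1..m+n} \<le> card {1..m}" by (metis card_inj_on_le finite_atLeastAtMost)
    with m show False by simp
  qed
  have V2: "\<not> \<sigma> b \<le> m" if b: "b \<in> {m+1..m+n}" for b
  proof
    assume nb: "\<sigma> b \<le> m"
    have "Kmn m n 1 b" using b m unfolding Kmn_def by auto
    then have "Kmn m n (\<sigma> 1) (\<sigma> b)" using pres b m by auto
    moreover have "\<sigma> 1 \<in> {1..m+n}" "\<sigma> b \<in> {1..m+n}" using aut_in[OF s] b m by auto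
    moreover have "\<sigma> 1 \<le> m" using V1 m by auto
    ultimately show False using nb Kmn_iff by auto
  qed
  show ?thesis using V1 V2 i by (cases "i \<le> m") auto
qed

lemma transp_aut:
  assumes a: "a \<in> {1..m+n}" and b: "b \<in> {1..m+n}" and ab: "(a \<le> m) = (b \<le> m)"
  shows "transpose a b \<in> graph_auts (m+n) (Kmn m n)"
proof -
  have p: "transpose a b permutes {1..m+n}" using a b by (rule permutes_swap_id)
  have part: "(transpose a b x \<le> m) = (x \<le> m)" for x
    using ab by (auto simp: transpose_def)
  have "Kmn m n i j \<longleftrightarrow> Kmn m n (transpose a b i) (transpose a b j)" if "i \<in> {1..m+n}" "j \<in> {1..m+n}" for i j
    using that Kmn_iff[OF that] Kmn_iff[of "transpose a b i" m n "transpose a b j"] permutes_in_image[OF p] part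
    by auto
  then show ?thesis unfolding graph_auts_def using p by auto
qed

lemma aut_comp:
  assumes "\<sigma> \<in> graph_auts N E" "\<tau> \<in> graph_auts N E"
  shows "\<tau> \<circ> \<sigma> \<in> graph_auts N E"
proof -
  have "\<sigma> permutes {1..N}" "\<tau> permutes {1..N}" using assms unfolding graph_auts_def by auto
  moreover have "E i j \<longleftrightarrow> E ((\<tau> \<circ> \<sigma>) i) ((\<tau> \<circ> \<sigma>) j)" if "i \<in> {1..N}" "j \<in> {1..N}" for i j
    using assms that aut_in[OF assms(1)] unfolding graph_auts_def by auto
  ultimately show ?thesis unfolding graph_auts_def by (auto intro: permutes_compose)
qed

definition orb :: "nat \<Rightarrow> (nat \<Rightarrow> nat \<Rightarrow> bool) \<Rightarrow> nat set \<Rightarrow> nat set set" where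
  "orb N E p = (\<lambda>\<sigma>. \<sigma> ` p) ` graph_auts N E"

lemma orb_eq:
  assumes "p \<in> C" "\<And>\<sigma> q. \<sigma> \<in> graph_auts N E \<Longrightarrow> q \<in> C \<Longrightarrow> \<sigma> ` q \<in> C"
    "\<And>q. q \<in> C \<Longrightarrow> \<exists>\<sigma>\<in>graph_auts N E. \<sigma> ` p = q"
  shows "orb N E p = C"
  using assms unfolding orb_def by blast

lemma two_transp:
  assumes "i \<noteq> j" "k \<noteq> l"
  shows "(transpose (transpose i k j) l \<circ> transpose i k) ` {i,j} = {k,l}"
proof -
  have "transpose i k j \<noteq> k" using assms by (auto simp: transpose_def)
  then show ?thesis using assms by (auto simp: transpose_def)
qed




context
  fixes m n :: nat
  assumes m: "1 < m" "m < n"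
begin

abbreviation "AU \<equiv> graph_auts (m+n) (Kmn m n)"

definition "C1 = {{i} | i. i \<in> {1..m}}"
definition "C2 = {{i} | i. i \<in> {m+1..m+n}}"
definition "C3 = {{i,j} | i j. i \<in> {1..m} \<and> j \<in> {1..m} \<and> i \<noteq> j}"
definition "C4 = {{i,j} | i j. i \<in> {m+1..m+n} \<and> j \<in> {m+1..m+n} \<and> i \<noteq> j}"
definition "C5 = {{i,j} | i j. i \<in> {1..m} \<and> j \<in> {m+1..m+n}}"

lemma in1: "\<sigma> \<in> AU \<Longrightarrow> i \<in> {1..m} \<Longrightarrow> \<sigma> i \<in> {1..m}"
  using aut_part[OF m, of \<sigma> i] aut_in[of \<sigma> "m+n" "Kmn m n" i] by auto

lemma in2: "\<sigma> \<in> AU \<Longrightarrow> i \<in> {m+1..m+n} \<Longrightarrow> \<sigma> i \<in> {m+1..m+n}"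
  using aut_part[OF m, of \<sigma> i] aut_in[of \<sigma> "m+n" "Kmn m n" i] by auto

lemma neq: "\<sigma> \<in> AU \<Longrightarrow> i \<noteq> j \<Longrightarrow> \<sigma> i \<noteq> \<sigma> j"
  using aut_inj[of \<sigma>] by (auto dest: injD)

lemma orb1: "p \<in> C1 \<Longrightarrow> orb (m+n) (Kmn m n) p = C1"
proof (rule orb_eq)
  fix \<sigma> q assume "\<sigma> \<in> AU" "q \<in> C1"
  then show "\<sigma> ` q \<in> C1" unfolding C1_def using in1 by auto
next
  fix q assume p: "p \<in> C1" and "q \<in> C1"
  then obtain i k where ik: "p = {i}" "q = {k}" "i \<in> {1..m}" "k \<in> {1..m}" unfolding C1_def by auto
  then have "transpose i k \<in> AU" by (intro transp_aut) auto
  moreover have "transpose i k ` p = q" using ik by simp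
  ultimately show "\<exists>\<sigma>\<in>AU. \<sigma> ` p = q" by blast
qed

lemma orb2: "p \<in> C2 \<Longrightarrow> orb (m+n) (Kmn m n) p = C2"
proof (rule orb_eq)
  fix \<sigma> q assume "\<sigma> \<in> AU" "q \<in> C2"
  then show "\<sigma> ` q \<in> C2" unfolding C2_def using in2 by auto
next
  fix q assume p: "p \<in> C2" and "q \<in> C2"
  then obtain i k where ik: "p = {i}" "q = {k}" "i \<in> {m+1..m+n}" "k \<in> {m+1..m+n}" unfolding C2_def by auto
  then have "transpose i k \<in> AU" by (intro transp_aut) auto
  moreover have "transpose i k ` p = q" using ik by simp
  ultimately show "\<exists>\<sigma>\<in>AU. \<sigma> ` p = q" by blast
qed

lemma orb3: "p \<in> C3 \<Longrightarrow> orb (m+n) (Kmn m n) p = C3"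
proof (rule orb_eq)
  fix \<sigma> q assume s: "\<sigma> \<in> AU" and "q \<in> C3"
  then obtain i j where "q = {i,j}" "i \<in> {1..m}" "j \<in> {1..m}" "i \<noteq> j" unfolding C3_def by auto
  then show "\<sigma> ` q \<in> C3" unfolding C3_def using in1[OF s] neq[OF s] by blast
next
  fix q assume p: "p \<in> C3" and "q \<in> C3"
  then obtain i j k l where ik: "p = {i,j}" "q = {k,l}" "i \<in> {1..m}" "k \<in> {1..m}" "j \<in> {1..m}" "l \<in> {1..m}"
    "i \<noteq> j" "k \<noteq> l" unfolding C3_def by blast
  have "transpose i k \<in> AU" using ik by (intro transp_aut) auto
  moreover have "transpose i k j \<in> {1..m}" using ik by (auto simp: transpose_def)
  then have "transpose (transpose i k j) l \<in> AU" using ik m by (intro transp_aut) auto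
  ultimately have "transpose (transpose i k j) l \<circ> transpose i k \<in> AU" by (rule aut_comp)
  moreover have "(transpose (transpose i k j) l \<circ> transpose i k) ` p = q" using ik two_transp by simp
  ultimately show "\<exists>\<sigma>\<in>AU. \<sigma> ` p = q" by blast
qed

lemma orb4: "p \<in> C4 \<Longrightarrow> orb (m+n) (Kmn m n) p = C4"
proof (rule orb_eq)
  fix \<sigma> q assume s: "\<sigma> \<in> AU" and "q \<in> C4"
  then obtain i j where "q = {i,j}" "i \<in> {m+1..m+n}" "j \<in> {m+1..m+n}" "i \<noteq> j" unfolding C4_def by auto
  then show "\<sigma> ` q \<in> C4" unfolding C4_def using in2[OF s] neq[OF s] by blast
next
  fix q assume p: "p \<in> C4" and "q \<in> C4"
  then obtain i j k l where ik: "p = {i,j}" "q = {k,l}" "i \<in> {m+1..m+n}" "k \<in> {m+1..m+n}" "j \<in> {m+1..m+n}" "l \<in> {m+1..m+n}"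
    "i \<noteq> j" "k \<noteq> l" unfolding C4_def by blast
  have "transpose i k \<in> AU" using ik by (intro transp_aut) auto
  moreover have "transpose i k j \<in> {m+1..m+n}" using ik by (auto simp: transpose_def)
  then have "transpose (transpose i k j) l \<in> AU" using ik m by (intro transp_aut) auto
  ultimately have "transpose (transpose i k j) l \<circ> transpose i k \<in> AU" by (rule aut_comp)
  moreover have "(transpose (transpose i k j) l \<circ> transpose i k) ` p = q" using ik two_transp by simp
  ultimately show "\<exists>\<sigma>\<in>AU. \<sigma> ` p = q" by blast
qed

lemma orb5: "p \<in> C5 \<Longrightarrow> orb (m+n) (Kmn m n) p = C5"
proof (rule orb_eq)
  fix \<sigma> q assume s: "\<sigma> \<in> AU" and "q \<in> C5"
  then obtain i j where "q = {i,j}" "i \<in> {1..m}" "j \<in> {m+1..m+n}" unfolding C5_def by auto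
  then show "\<sigma> ` q \<in> C5" unfolding C5_def using in1[OF s] in2[OF s] by blast
next
  fix q assume p: "p \<in> C5" and "q \<in> C5"
  then obtain i j k l where ik: "p = {i,j}" "q = {k,l}" "i \<in> {1..m}" "k \<in> {1..m}" "j \<in> {m+1..m+n}" "l \<in> {m+1..m+n}"
    unfolding C5_def by blast
  have ij: "i \<noteq> j" "k \<noteq> l" using ik by auto
  have "transpose i k \<in> AU" using ik by (intro transp_aut) auto
  moreover have "transpose i k j \<in> {m+1..m+n}" using ik by (auto simp: transpose_def)
  then have "transpose (transpose i k j) l \<in> AU" using ik m by (intro transp_aut) auto
  ultimately have "transpose (transpose i k j) l \<circ> transpose i k \<in> AU" by (rule aut_comp)
  moreover have "(transpose (transpose i k j) l \<circ> transpose i k) ` p = q" using ik two_transp[OF ij] by simp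
  ultimately show "\<exists>\<sigma>\<in>AU. \<sigma> ` p = q" by blast
qed

lemma UP_eq: "unordered_pairs (m+n) = C1 \<union> C2 \<union> C3 \<union> C4 \<union> C5"
proof
  show "unordered_pairs (m+n) \<subseteq> C1 \<union> C2 \<union> C3 \<union> C4 \<union> C5"
  proof
    fix p assume "p \<in> unordered_pairs (m+n)"
    then obtain i j where p: "p = {i,j}" "i \<in> {1..m+n}" "j \<in> {1..m+n}" unfolding unordered_pairs_def by auto
    consider "i = j" "i \<le> m" | "i = j" "\<not> i \<le> m" | "i \<noteq> j" "i \<le> m" "j \<le> m" | "i \<noteq> j" "\<not> i \<le> m" "\<not> j \<le> m"
      | "i \<le> m" "\<not> j \<le> m" | "\<not> i \<le> m" "j \<le> m" by blast
    then show "p \<in> C1 \<union> C2 \<union> C3 \<union> C4 \<union> C5"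
    proof cases
      case 1 then have "p \<in> C1" using p unfolding C1_def by auto then show ?thesis by blast
    next
      case 2 then have "p \<in> C2" using p unfolding C2_def by auto then show ?thesis by blast
    next
      case 3 then have "p \<in> C3" using p unfolding C3_def by auto then show ?thesis by blast
    next
      case 4 then have "p \<in> C4" using p unfolding C4_def by auto then show ?thesis by blast
    next
      case 5 then have "p \<in> C5" using p unfolding C5_def by auto then show ?thesis by blast
    next
      case 6 then have "p = {j,i}" "j \<in> {1..m}" "i \<in> {m+1..m+n}" using p by auto
      then have "p \<in> C5" unfolding C5_def by blast then show ?thesis by blast
    qed
  qed
next
  have a: "{i,j} \<in> unordered_pairs (m+n)" if "i \<in> {1..m+n}" "j \<in> {1..m+n}" for i j
    unfolding unordered_pairs_def using that by blast
  have "C1 \<subseteq> unordered_pairs (m+n)" unfolding C1_def using a[of i i for i] by force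
  moreover have "C2 \<subseteq> unordered_pairs (m+n)" unfolding C2_def using a[of i i for i] by force
  moreover have "C3 \<subseteq> unordered_pairs (m+n)" unfolding C3_def using a by force
  moreover have "C4 \<subseteq> unordered_pairs (m+n)" unfolding C4_def using a by force
  moreover have "C5 \<subseteq> unordered_pairs (m+n)" unfolding C5_def using a by force
  ultimately show "C1 \<union> C2 \<union> C3 \<union> C4 \<union> C5 \<subseteq> unordered_pairs (m+n)" by blast
qed

lemma w1: "{1} \<in> C1" using m unfolding C1_def by auto
lemma w2: "{m+1} \<in> C2" using m unfolding C2_def by auto
lemma w3: "{1,2} \<in> C3" using m unfolding C3_def by (intro CollectI exI[of _ 1] exI[of _ 2]) auto
lemma w4: "{m+1,m+2} \<in> C4" using m unfolding C4_def by (intro CollectI exI[of _ "m+1"] exI[of _ "m+2"]) auto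
lemma w5: "{1,m+1} \<in> C5" using m unfolding C5_def by (intro CollectI exI[of _ 1] exI[of _ "m+1"]) auto

lemma num_orb: "num_pair_orbits (m + n) (Kmn m n) = 5"
proof -
  have po: "pair_orbits (m+n) (Kmn m n) = orb (m+n) (Kmn m n) ` unordered_pairs (m+n)"
    unfolding pair_orbits_def orb_def ..
  have "orb (m+n) (Kmn m n) ` unordered_pairs (m+n) = {C1, C2, C3, C4, C5}"
  proof -
    have img: "orb (m+n) (Kmn m n) ` C = {C}" if "\<And>p. p \<in> C \<Longrightarrow> orb (m+n) (Kmn m n) p = C" "x \<in> C" for C x
      using that by auto
    show ?thesis unfolding UP_eq image_Un
      using img[OF orb1 w1] img[OF orb2 w2] img[OF orb3 w3] img[OF orb4 w4] img[OF orb5 w5] by auto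
  qed
  moreover have "C1 \<noteq> C2" "C1 \<noteq> C3" "C1 \<noteq> C4" "C1 \<noteq> C5" "C2 \<noteq> C3" "C2 \<noteq> C4" "C2 \<noteq> C5"
    "C3 \<noteq> C4" "C3 \<noteq> C5" "C4 \<noteq> C5"
  proof -
    have "{1} \<notin> C2" "{1} \<notin> C3" "{1} \<notin> C4" "{1} \<notin> C5" using m
      unfolding C2_def C3_def C4_def C5_def by auto
    then show "C1 \<noteq> C2" "C1 \<noteq> C3" "C1 \<noteq> C4" "C1 \<noteq> C5" using w1 by auto
    have "{m+1} \<notin> C3" "{m+1} \<notin> C4" "{m+1} \<notin> C5" using m
      unfolding C3_def C4_def C5_def by auto
    then show "C2 \<noteq> C3" "C2 \<noteq> C4" "C2 \<noteq> C5" using w2 by auto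
    have "{1,2} \<notin> C4" "{1,2} \<notin> C5" using m
      unfolding C4_def C5_def by (auto simp: doubleton_eq_iff)
    then show "C3 \<noteq> C4" "C3 \<noteq> C5" using w3 by auto
    have "{m+1,m+2} \<notin> C5" using m
      unfolding C5_def by (auto simp: doubleton_eq_iff)
    then show "C4 \<noteq> C5" using w4 by auto
  qed
  ultimately show ?thesis unfolding num_pair_orbits_def po by simp
qed

end


theorem mainTheorem6:
  fixes m n :: nat
  assumes "1 < m" and "m < n"
  shows "num_distinct_eigenvalues (m + n) (Kmn m n) = 3
       \<and> num_pair_orbits (m + n) (Kmn m n) = 5
       \<and> linear_forms_in_ideal (m + n) (Kmn m n) = lf_span (Kmn_forms m n)"
  using num_eig[OF assms] num_orb[OF assms] incl1[OF assms] incl2[OF assms] by auto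

end
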